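(* Let $H$ be a real Hilbert space and let $\mathcal{S}\subset H$ be a dense subspace. Equip $H\otimes \mathcal{C}l_n$ with the $\mathcal{C}l_n$-valued inner product $\langle\cdot,\cdot\rangle$ induced by the inner product of $H$. Let $D:\mathcal{S}\otimes\mathcal{C}l_n\to\mathcal{S}\otimes\mathcal{C}l_n$ be a linear map which has a dual operator $D^*$ on $\mathcal{S}\otimes\mathcal{C}l_n$, i.e. $\langle Df,g\rangle=\langle f,D^*g\rangle$ for all $f,g\in\mathcal{S}\otimes\mathcal{C}l_n$, and suppose $D^*D=DD^*$. Let $G$ be an operator on $\mathcal{S}\otimes\mathcal{C}l_n$ that is an inverse of $D$, i.e. $DG=GD=I$. Define $\Pi=D^*G$. Then $\Pi$ is an isometric operator in $H\otimes\mathcal{C}l_n$: $\langle \Pi f,\Pi g\rangle=\langle f,g\rangle$ for all $f,g\in \mathcal{S}\otimes\mathcal{C}l_n$.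
   Context: $\mathcal{C}l_n$ is the real Clifford algebra generated by an orthonormal basis $e_1,\dots,e_n$ of $\mathbb{R}^n$ with relations $e_ie_j+e_je_i=-2\delta_{ij}e_0$, $e_0$ the identity. For $a=\sum_A a_Ae_A\in\mathcal{C}l_n$, the conjugation $\bar a$ is the anti-involution with $\overline{e_{j_1}\cdots e_{j_r}}=(-1)^r e_{j_r}\cdots e_{j_1}$ composed with reversion, i.e. $\bar a=\tilde a^{\dagger}$ where $\tilde{}$ is reversion and $a^\dagger$ is Clifford conjugation. The $\mathcal{C}l_n$-valued inner product on $H\otimes\mathcal{C}l_n$ is $\langle \sum_A u_Ae_A,\sum_B v_Be_B\rangle=\sum_{A,B}\langle u_A,v_B\rangle_H\,\overline{e_A}e_B$ (for $H=L^2$ of a measure space this is $\int\overline{u}v$). *)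

theory Defs
  imports "HOL-Analysis.Analysis"
begin

text \<open>An element sum_A a_A e_A is represented by its
coefficient function nat set => real, where only subsets A of {1..n} carry
coefficients (index sets A = {j1 < ... < jr}, e_A = e_j1 ... e_jr, e_{} = e_0).\<close>

definition clif_elems :: "nat \<Rightarrow> (nat set \<Rightarrow> real) set" where
  "clif_elems n = {a. \<forall>A. \<not> A \<subseteq> {1..n} \<longrightarrow> a A = 0}"

definition clif_basis :: "nat set \<Rightarrow> (nat set \<Rightarrow> real)" where
  "clif_basis A = (\<lambda>C. if C = A then 1 else 0)"

text \<open>Sign in e_A e_B = sign(A,B) e_(A symmetric-difference B), derived from
e_i e_j + e_j e_i = -2 delta_ij: one factor -1 per pair (a,b) with a in A, b in B,
b < a (anticommutation), and one factor -1 per common index (e_i e_i = -1).\<close>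

definition clif_sign :: "nat set \<Rightarrow> nat set \<Rightarrow> real" where
  "clif_sign A B = (-1) ^ (card {(a, b). a \<in> A \<and> b \<in> B \<and> b < a} + card (A \<inter> B))"

definition clif_mult :: "nat \<Rightarrow> (nat set \<Rightarrow> real) \<Rightarrow> (nat set \<Rightarrow> real) \<Rightarrow> (nat set \<Rightarrow> real)" where
  "clif_mult n x y = (\<lambda>C. \<Sum>A\<in>Pow {1..n}. \<Sum>B\<in>Pow {1..n}.
      (if (A - B) \<union> (B - A) = C then x A * y B * clif_sign A B else 0))"

text \<open>Conjugation: the anti-involution with conj(e_j1...e_jr) = (-1)^r e_jr ... e_j1
(reversion composed with the grade involution).  Since e_jr...e_j1 = (-1)^(r(r-1)/2) e_A,
this is conj(e_A) = (-1)^(r(r+1)/2) e_A with r = card A, extended linearly.\<close>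

definition clif_conj :: "(nat set \<Rightarrow> real) \<Rightarrow> (nat set \<Rightarrow> real)" where
  "clif_conj a = (\<lambda>A. (-1) ^ (card A * (card A + 1) div 2) * a A)"

text \<open>H tensor Cl_n: functions u : nat set => H with u_A = 0 unless A is a subset of {1..n};
u stands for sum_A u_A e_A.\<close>

definition HCl :: "nat \<Rightarrow> (nat set \<Rightarrow> 'h::real_vector) set" where
  "HCl n = {u. \<forall>A. \<not> A \<subseteq> {1..n} \<longrightarrow> u A = 0}"

definition SCl :: "nat \<Rightarrow> 'h::real_vector set \<Rightarrow> (nat set \<Rightarrow> 'h) set" where
  "SCl n S = {u \<in> HCl n. \<forall>A. u A \<in> S}"

definition cl_inner :: "nat \<Rightarrow> (nat set \<Rightarrow> 'h::real_inner) \<Rightarrow> (nat set \<Rightarrow> 'h) \<Rightarrow> (nat set \<Rightarrow> real)" where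
  "cl_inner n u v = (\<lambda>C. \<Sum>A\<in>Pow {1..n}. \<Sum>B\<in>Pow {1..n}.
      inner (u A) (v B) * clif_mult n (clif_conj (clif_basis A)) (clif_basis B) C)"

end

theory Submission
  imports Defs
begin

definition sg :: "nat \<Rightarrow> real" where "sg r = (-1) ^ (r * (r + 1) div 2)"

lemma inv_count:
  fixes A B :: "nat set" assumes "finite A" "finite B"
  shows "card {(a, b). a \<in> A \<and> b \<in> B \<and> b < a} + card {(a, b). a \<in> B \<and> b \<in> A \<and> b < a}
         + card (A \<inter> B) = card A * card B"
proof -
  let ?X = "{(a, b). a \<in> A \<and> b \<in> B \<and> b < a}"
  let ?Y = "{(a, b). a \<in> B \<and> b \<in> A \<and> b < a}"
  let ?Y' = "{(a, b). a \<in> A \<and> b \<in> B \<and> a < b}"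
  let ?Z = "(\<lambda>x. (x, x)) ` (A \<inter> B)"
  have fin: "finite (A \<times> B)" using assms by simp
  have eq: "A \<times> B = ?X \<union> ?Y' \<union> ?Z" by auto
  have fX: "finite ?X" by (rule finite_subset[OF _ fin]) auto
  have fY': "finite ?Y'" by (rule finite_subset[OF _ fin]) auto
  have fZ: "finite ?Z" using assms by simp
  have cY: "card ?Y' = card ?Y"
  proof -
    have "?Y' = (\<lambda>(a,b). (b,a)) ` ?Y" by auto
    moreover have "inj_on (\<lambda>(a,b). (b,a)) ?Y" by (auto simp: inj_on_def)
    ultimately show ?thesis by (simp add: card_image)
  qed
  have cZ: "card ?Z = card (A \<inter> B)" by (rule card_image) (auto simp: inj_on_def)
  have "card (A \<times> B) = card (?X \<union> ?Y') + card ?Z"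
    unfolding eq by (rule card_Un_disjoint) (use fX fY' fZ in auto)
  also have "card (?X \<union> ?Y') = card ?X + card ?Y'"
    by (rule card_Un_disjoint) (use fX fY' in auto)
  finally show ?thesis using cY cZ by (simp add: card_cartesian_product)
qed

lemma T_add: "(x + y) * (x + y + 1) div 2 = x * (x + 1) div 2 + y * (y + 1) div 2 + x * (y::nat)"
proof -
  have e: "(x + y) * (x + y + 1) = x * (x + 1) + y * (y + 1) + 2 * x * y" by algebra
  obtain p where p: "x * (x + 1) = 2 * p" by (metis dvd_def even_mult_iff odd_even_add odd_one)
  obtain q where q: "y * (y + 1) = 2 * q" by (metis dvd_def even_mult_iff odd_even_add odd_one)
  show ?thesis unfolding e p q by simp
qed

lemma parity:
  fixes a b c k i j :: nat
  assumes "c + 2 * k = a + b" "i + j + k = a * b"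
  shows "even (b * (b+1) div 2 + j + k + (c * (c+1) div 2 + a * (a+1) div 2 + i + k))"
proof -
  have h1: "(a+b) * (a+b+1) div 2 = a * (a+1) div 2 + b*(b+1) div 2 + a*b" by (rule T_add)
  have h2: "(c + 2*k) * (c+2*k+1) div 2 = c*(c+1) div 2 + (2*k)*(2*k+1) div 2 + c*(2*k)" by (rule T_add)
  have h3: "(2*k)*(2*k+1) div 2 = k*(2*k+1)" by simp
  define Ta where "Ta = a * (a+1) div 2"
  define Tb where "Tb = b * (b+1) div 2"
  define Tc where "Tc = c * (c+1) div 2"
  have "Ta + Tb + a*b = Tc + k*(2*k+1) + c*(2*k)"
    using h1 h2 h3 assms(1) unfolding Ta_def Tb_def Tc_def by metis
  then have "Tb + j + k + (Tc + Ta + i + k) = 2 * (Tc + k*k + k + c*k)"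
    using assms(2) by (simp add: algebra_simps)
  then show ?thesis unfolding Ta_def Tb_def Tc_def by presburger
qed

lemma m_eval:
  assumes "A \<subseteq> {1..n}" "B \<subseteq> {1..n}"
  shows "clif_mult n (clif_conj (clif_basis A)) (clif_basis B) C
       = (if (A - B) \<union> (B - A) = C then sg (card A) * clif_sign A B else 0)"
proof -
  let ?v = "(if (A - B) \<union> (B - A) = C then sg (card A) * clif_sign A B else 0)"
  have "clif_mult n (clif_conj (clif_basis A)) (clif_basis B) C =
     (\<Sum>A'\<in>Pow {1..n}. \<Sum>B'\<in>Pow {1..n}. if A' = A then (if B' = B then ?v else 0) else 0)"
    unfolding clif_mult_def
  proof (intro sum.cong refl)
    fix A' B'
    show "(if (A' - B') \<union> (B' - A') = C then clif_conj (clif_basis A) A' * clif_basis B B' * clif_sign A' B' else 0)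
      = (if A' = A then (if B' = B then ?v else 0) else 0)"
      unfolding clif_conj_def clif_basis_def sg_def
      by (cases "A' = A"; cases "B' = B"; simp)
  qed
  also have "\<dots> = (\<Sum>A'\<in>Pow {1..n}. if A' = A then ?v else 0)"
    using assms by (intro sum.cong refl) (simp add: sum.delta)
  also have "\<dots> = ?v"
    using assms by (simp add: sum.delta)
  finally show ?thesis .
qed

lemma sg_sq: "sg r * sg r = 1"
  unfolding sg_def by (simp add: power_add[symmetric] mult_2[symmetric] power_mult)

lemma neg1_eq: "even (x + y) \<Longrightarrow> (-1::real) ^ x = (-1) ^ y"
  by (cases "even x") (auto simp: minus_one_power_iff)

lemma m_swap:
  assumes "A \<subseteq> {1..n}" "B \<subseteq> {1..n}"
  shows "clif_mult n (clif_conj (clif_basis B)) (clif_basis A) C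
       = sg (card C) * clif_mult n (clif_conj (clif_basis A)) (clif_basis B) C"
proof (cases "(A - B) \<union> (B - A) = C")
  case False
  then have "(B - A) \<union> (A - B) \<noteq> C" by auto
  then show ?thesis using False unfolding m_eval[OF assms] m_eval[OF assms(2,1)] by simp
next
  case True
  have fA: "finite A" "finite B" using assms finite_subset by blast+
  define k where "k = card (A \<inter> B)"
  have cC: "card C + 2 * k = card A + card B"
  proof -
    have "card C = card (A - B) + card (B - A)" unfolding True[symmetric]
      by (rule card_Un_disjoint) (use fA in auto)
    moreover have "card (A - B) = card A - k" "card (B - A) = card B - k"
      unfolding k_def using fA by (auto simp: card_Diff_subset_Int Int_commute)
    moreover have "k \<le> card A" "k \<le> card B" unfolding k_def using fA by (auto intro: card_mono)
    ultimately show ?thesis by simp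
  qed
  have inv: "card {(a, b). a \<in> A \<and> b \<in> B \<and> b < a} + card {(a, b). a \<in> B \<and> b \<in> A \<and> b < a}
         + k = card A * card B" unfolding k_def by (rule inv_count[OF fA])
  have ev: "even (card B * (card B+1) div 2 + card {(a, b). a \<in> B \<and> b \<in> A \<and> b < a} + k
     + (card C * (card C+1) div 2 + card A * (card A+1) div 2 + card {(a, b). a \<in> A \<and> b \<in> B \<and> b < a} + k))"
    by (rule parity[OF cC inv])
  have "sg (card B) * clif_sign B A = sg (card C) * (sg (card A) * clif_sign A B)"
    unfolding sg_def clif_sign_def k_def[symmetric] Int_commute[of B A]
    unfolding power_add[symmetric] mult.assoc[symmetric]
    by (rule neg1_eq) (use ev in \<open>simp add: ac_simps\<close>)
  moreover have "(B - A) \<union> (A - B) = C" using True by auto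
  ultimately show ?thesis using True unfolding m_eval[OF assms] m_eval[OF assms(2,1)] by simp
qed

lemma cl_inner_swap:
  shows "cl_inner n v u C = sg (card C) * cl_inner n u v C"
proof -
  have "cl_inner n v u C = (\<Sum>B\<in>Pow {1..n}. \<Sum>A\<in>Pow {1..n}.
      inner (v A) (u B) * clif_mult n (clif_conj (clif_basis A)) (clif_basis B) C)"
    unfolding cl_inner_def by (rule sum.swap)
  also have "\<dots> = (\<Sum>B\<in>Pow {1..n}. \<Sum>A\<in>Pow {1..n}.
      sg (card C) * (inner (u B) (v A) * clif_mult n (clif_conj (clif_basis B)) (clif_basis A) C))"
    apply (intro sum.cong refl)
    subgoal for x y using m_swap[of x n y C] by (simp add: inner_commute)
    done
  also have "\<dots> = sg (card C) * cl_inner n u v C"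
    unfolding cl_inner_def by (simp add: sum_distrib_left)
  finally show ?thesis .
qed

theorem mainTheorem1:
  fixes n :: nat
    and S :: "'h::{real_inner, complete_space} set"
    and D Dstar G :: "(nat set \<Rightarrow> 'h) \<Rightarrow> (nat set \<Rightarrow> 'h)"
  assumes S_subspace: "subspace S"
    and S_dense: "closure S = UNIV"
    and D_maps: "\<forall>f\<in>SCl n S. D f \<in> SCl n S"
    and D_add: "\<forall>f\<in>SCl n S. \<forall>g\<in>SCl n S. D (\<lambda>A. f A + g A) = (\<lambda>A. D f A + D g A)"
    and D_scale: "\<forall>f\<in>SCl n S. \<forall>c::real. D (\<lambda>A. c *\<^sub>R f A) = (\<lambda>A. c *\<^sub>R D f A)"
    and Dstar_maps: "\<forall>f\<in>SCl n S. Dstar f \<in> SCl n S"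
    and dual: "\<forall>f\<in>SCl n S. \<forall>g\<in>SCl n S. cl_inner n (D f) g = cl_inner n f (Dstar g)"
    and normal: "\<forall>f\<in>SCl n S. Dstar (D f) = D (Dstar f)"
    and G_maps: "\<forall>f\<in>SCl n S. G f \<in> SCl n S"
    and G_inverse: "\<forall>f\<in>SCl n S. D (G f) = f \<and> G (D f) = f"
  shows "\<forall>f\<in>SCl n S. \<forall>g\<in>SCl n S.
           cl_inner n ((Dstar \<circ> G) f) ((Dstar \<circ> G) g) = cl_inner n f g"
proof (intro ballI)
  fix f g assume f: "f \<in> SCl n S" and g: "g \<in> SCl n S"
  have radj: "cl_inner n (Dstar a) c = cl_inner n a (D c)" if a: "a \<in> SCl n S" and c: "c \<in> SCl n S" for a c
  proof
    fix C
    have "cl_inner n (Dstar a) c C = sg (card C) * cl_inner n c (Dstar a) C" by (rule cl_inner_swap)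
    also have "cl_inner n c (Dstar a) = cl_inner n (D c) a" using dual a c by simp
    also have "sg (card C) * cl_inner n (D c) a C = sg (card C) * (sg (card C) * cl_inner n a (D c) C)"
      by (simp add: cl_inner_swap[of n "D c" a C])
    also have "\<dots> = cl_inner n a (D c) C" by (simp add: mult.assoc[symmetric] sg_sq)
    finally show "cl_inner n (Dstar a) c C = cl_inner n a (D c) C" .
  qed
  have a: "G f \<in> SCl n S" and b: "G g \<in> SCl n S" using G_maps f g by auto
  have "cl_inner n ((Dstar \<circ> G) f) ((Dstar \<circ> G) g) = cl_inner n (Dstar (G f)) (Dstar (G g))" by simp
  also have "\<dots> = cl_inner n (G f) (D (Dstar (G g)))" using radj a b Dstar_maps by blast
  also have "D (Dstar (G g)) = Dstar (D (G g))" using normal b by simp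
  also have "\<dots> = Dstar g" using G_inverse g by simp
  also have "cl_inner n (G f) (Dstar g) = cl_inner n (D (G f)) g" using dual a g by simp
  also have "D (G f) = f" using G_inverse f by simp
  finally show "cl_inner n ((Dstar \<circ> G) f) ((Dstar \<circ> G) g) = cl_inner n f g" .
qed

end
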